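(* Under the standing setting, if $f_0\in[0,\infty)$ and $f_\infty\in[0,\infty)$, then there exists $\overline\lambda>0$ such that problem (P$_\lambda$) has no positive solution for any $\lambda\in[0,\overline\lambda)$.
   Context: Standing setting. $\varphi:\mathbb{R}\to\mathbb{R}$ is an odd, increasing homeomorphism satisfying condition (A): there exist increasing homeomorphisms $\psi_1,\psi_2:[0,\infty)\to[0,\infty)$ such that $\varphi(x)\psi_1(y)\le \varphi(xy)\le \varphi(x)\psi_2(y)$ for all $x,y\ge 0$. Let $c,d\in C([0,1],(0,\infty))$, and $\|\cdot\|_\infty$ the maximum norm on $C[0,1]$. Let $f\in C([0,\infty),[0,\infty))$ with $f(s)>0$ for $s>0$, and write $f_0=\lim_{s\to0^+}f(s)/\varphi(s)$, $f_\infty=\lim_{s\to\infty}f(s)/\varphi(s)$ (assumed to exist in $[0,\infty]$ whenever referred to). Let $h\in C((0,1),[0,\infty))$, $h\not\equiv 0$, with $\int_0^{1/2}\psi_1^{-1}\big(\int_s^{1/2}h(\tau)d\tau\big)ds+\int_{1/2}^1\psi_1^{-1}\big(\int_{1/2}^s h(\tau)d\tau\big)ds<\infty$. Notation attached to $h$: $\alpha_h=\sup\{x\in(0,1): h=0 \text{ on }(0,x)\}$ ($0$ if empty); $\beta_h=\inf\{x\in(0,1): h=0\text{ on }(x,1)\}$ ($1$ if empty); $\bar\alpha_h=\sup\{x\in(\alpha_h,1]: h>0 \text{ on }(\alpha_h,x)\}$; $\bar\beta_h=\inf\{x\in[0,\beta_h): h>0\text{ on }(x,\beta_h)\}$; $\gamma_h^1=(3\alpha_h+\bar\alpha_h)/4$,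 $\gamma_h^2=(\bar\beta_h+3\beta_h)/4$. It is assumed that $0\le\alpha_h<\gamma_h^1<\gamma_h^2<\beta_h\le 1$. For $\lambda\ge0$, problem (P$_\lambda$) is: $(d(t)\varphi(c(t)u'(t)))'+\lambda h(t)f(u(t))=0$ for $t\in(0,1)$, $u(0)=u(1)=0$. A solution is $u\in C[0,1]\cap C^1(0,1)$ such that $t\mapsto d(t)\varphi(c(t)u'(t))$ is continuously differentiable on $(0,1)$ and the equation and boundary conditions hold; it is positive if $u(t)>0$ for all $t\in(0,1)$. *)

theory Defs
  imports "HOL-Analysis.Analysis"
begin

definition incr_homeo_pos :: "(real \<Rightarrow> real) \<Rightarrow> bool" where
  "incr_homeo_pos \<psi> \<longleftrightarrow> (\<exists>g. homeomorphism {0..} {0..} \<psi> g) \<and> strict_mono_on {0..} \<psi>"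

definition phi_cond_A :: "(real \<Rightarrow> real) \<Rightarrow> (real \<Rightarrow> real) \<Rightarrow> (real \<Rightarrow> real) \<Rightarrow> bool" where
  "phi_cond_A \<phi> \<psi>1 \<psi>2 \<longleftrightarrow>
     (\<exists>g. homeomorphism UNIV UNIV \<phi> g) \<and> strict_mono \<phi> \<and> (\<forall>x. \<phi> (-x) = - \<phi> x) \<and>
     incr_homeo_pos \<psi>1 \<and> incr_homeo_pos \<psi>2 \<and>
     (\<forall>x\<ge>0. \<forall>y\<ge>0. \<phi> x * \<psi>1 y \<le> \<phi> (x*y) \<and> \<phi> (x*y) \<le> \<phi> x * \<psi>2 y)"

definition alpha_h :: "(real \<Rightarrow> real) \<Rightarrow> real" where
  "alpha_h h = (let S = {x\<in>{0<..<1}. \<forall>t\<in>{0<..<x}. h t = 0} in if S = {} then 0 else Sup S)"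

definition beta_h :: "(real \<Rightarrow> real) \<Rightarrow> real" where
  "beta_h h = (let S = {x\<in>{0<..<1}. \<forall>t\<in>{x<..<1}. h t = 0} in if S = {} then 1 else Inf S)"

text \<open>If the defining set is empty we use alpha_h (resp. beta_h), so the standing
  assumption alpha_h < gamma1 (resp. gamma2 < beta_h) fails.\<close>
definition bar_alpha_h :: "(real \<Rightarrow> real) \<Rightarrow> real" where
  "bar_alpha_h h = (let S = {x\<in>{alpha_h h<..1}. \<forall>t\<in>{alpha_h h<..<x}. h t > 0}
                    in if S = {} then alpha_h h else Sup S)"

definition bar_beta_h :: "(real \<Rightarrow> real) \<Rightarrow> real" where
  "bar_beta_h h = (let S = {x\<in>{0..<beta_h h}. \<forall>t\<in>{x<..<beta_h h}. h t > 0}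
                   in if S = {} then beta_h h else Inf S)"

definition gamma1_h :: "(real \<Rightarrow> real) \<Rightarrow> real" where
  "gamma1_h h = (3 * alpha_h h + bar_alpha_h h) / 4"

definition gamma2_h :: "(real \<Rightarrow> real) \<Rightarrow> real" where
  "gamma2_h h = (bar_beta_h h + 3 * beta_h h) / 4"

definition is_solution ::
  "(real \<Rightarrow> real) \<Rightarrow> (real \<Rightarrow> real) \<Rightarrow> (real \<Rightarrow> real) \<Rightarrow> (real \<Rightarrow> real) \<Rightarrow> (real \<Rightarrow> real)
   \<Rightarrow> real \<Rightarrow> (real \<Rightarrow> real) \<Rightarrow> bool" where
  "is_solution \<phi> c d h f lam u \<longleftrightarrow>
     continuous_on {0..1} u \<and>
     (\<exists>u' w'. (\<forall>t\<in>{0<..<1}. (u has_real_derivative u' t) (at t)) \<and> continuous_on {0<..<1} u' \<and>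
        (\<forall>t\<in>{0<..<1}. ((\<lambda>s. d s * \<phi> (c s * u' s)) has_real_derivative w' t) (at t)) \<and>
        continuous_on {0<..<1} w' \<and>
        (\<forall>t\<in>{0<..<1}. w' t + lam * h t * f (u t) = 0)) \<and>
     u 0 = 0 \<and> u 1 = 0"

definition is_pos_solution ::
  "(real \<Rightarrow> real) \<Rightarrow> (real \<Rightarrow> real) \<Rightarrow> (real \<Rightarrow> real) \<Rightarrow> (real \<Rightarrow> real) \<Rightarrow> (real \<Rightarrow> real)
   \<Rightarrow> real \<Rightarrow> (real \<Rightarrow> real) \<Rightarrow> bool" where
  "is_pos_solution \<phi> c d h f lam u \<longleftrightarrow> is_solution \<phi> c d h f lam u \<and> (\<forall>t\<in>{0<..<1}. u t > 0)"

end

theory Submission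
  imports Defs
begin

lemma inv_props:
  assumes "incr_homeo_pos \<psi>"
  defines "g \<equiv> the_inv_into {0..} \<psi>"
  shows "\<forall>z\<ge>0. g z \<ge> 0 \<and> \<psi> (g z) = z"
    and "\<forall>a b. 0 \<le> a \<longrightarrow> a \<le> b \<longrightarrow> g a \<le> g b"
    and "continuous_on {0..} g" and "g 0 = 0"
proof -
  obtain g0 where hom: "homeomorphism {0..} {0..} \<psi> g0" and sm: "strict_mono_on {0..} \<psi>"
    using assms(1) unfolding incr_homeo_pos_def by blast
  have inj: "inj_on \<psi> {0..}" using sm strict_mono_on_imp_inj_on by blast
  have g0p: "\<forall>z\<ge>0. g0 z \<ge> 0 \<and> \<psi> (g0 z) = z"
    using hom unfolding homeomorphism_def by force
  have geq: "\<And>z. z \<ge> 0 \<Longrightarrow> g z = g0 z"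
    unfolding g_def using g0p inj by (metis atLeast_iff the_inv_into_f_f)
  show P1: "\<forall>z\<ge>0. g z \<ge> 0 \<and> \<psi> (g z) = z" using g0p geq by simp
  show P2: "\<forall>a b. 0 \<le> a \<longrightarrow> a \<le> b \<longrightarrow> g a \<le> g b"
  proof (intro allI impI)
    fix a b :: real assume "0 \<le> a" "a \<le> b"
    show "g a \<le> g b"
    proof (rule ccontr)
      assume "\<not> g a \<le> g b"
      hence "\<psi> (g b) < \<psi> (g a)" using sm P1 \<open>0 \<le> a\<close> \<open>a \<le> b\<close>
        by (smt (verit, best) atLeast_iff strict_mono_onD)
      thus False using P1 \<open>0 \<le> a\<close> \<open>a \<le> b\<close> by force
    qed
  qed
  have "continuous_on {0..} g0" using hom unfolding homeomorphism_def by blast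
  thus "continuous_on {0..} g" using continuous_on_cong[of "{0..}" "{0..}" g g0] geq by auto
  obtain x where x: "x \<ge> 0" "\<psi> x = 0" using hom unfolding homeomorphism_def
    by (metis atLeast_iff image_iff order_refl)
  have "\<psi> 0 \<ge> 0" using hom unfolding homeomorphism_def by force
  moreover have "\<psi> 0 \<le> \<psi> x" using sm x
    by (metis atLeast_iff order.order_iff_strict order_refl strict_mono_onD)
  ultimately have "\<psi> 0 = 0" using x by simp
  thus "g 0 = 0" unfolding g_def using inj by (metis atLeast_iff order_refl the_inv_into_f_f)
qed

lemma f_bound:
  fixes f \<phi> :: "real \<Rightarrow> real"
  assumes fc: "continuous_on {0..} f" and phic: "continuous_on UNIV \<phi>"
    and phipos: "\<And>s. s > 0 \<Longrightarrow> \<phi> s > 0"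
    and f0: "((\<lambda>s. f s / \<phi> s) \<longlongrightarrow> f0) (at_right 0)"
    and finf: "((\<lambda>s. f s / \<phi> s) \<longlongrightarrow> finf) at_top"
  shows "\<exists>K>0. \<forall>s>0. f s / \<phi> s \<le> K"
proof -
  have "eventually (\<lambda>s. f s / \<phi> s < f0 + 1) (at_right 0)"
    using order_tendstoD(2)[OF f0] by simp
  then obtain \<delta> where d: "\<delta> > 0" "\<And>s. 0 < s \<Longrightarrow> s < \<delta> \<Longrightarrow> f s / \<phi> s < f0 + 1"
    unfolding eventually_at_right_field by auto
  have "eventually (\<lambda>s. f s / \<phi> s < finf + 1) at_top"
    using order_tendstoD(2)[OF finf] by simp
  then obtain T where T: "\<And>s. s \<ge> T \<Longrightarrow> f s / \<phi> s < finf + 1"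
    unfolding eventually_at_top_linorder by auto
  have "continuous_on {\<delta>/2..max T \<delta>} (\<lambda>s. f s / \<phi> s)"
    using d(1) phipos
    by (intro continuous_intros continuous_on_subset[OF fc] continuous_on_subset[OF phic]) 
       (auto, smt (verit) field_sum_of_halves)
  moreover have "compact {\<delta>/2..max T \<delta>}" "{\<delta>/2..max T \<delta>} \<noteq> {}" using d(1) by auto
  ultimately obtain x0 where "x0 \<in> {\<delta>/2..max T \<delta>}" and x0: "\<forall>y\<in>{\<delta>/2..max T \<delta>}. f y / \<phi> y \<le> f x0 / \<phi> x0"
    using continuous_attains_sup[of "{\<delta>/2..max T \<delta>}" "\<lambda>s. f s / \<phi> s"] by blast
  define B where "B = f x0 / \<phi> x0"
  have B: "\<And>s. s \<in> {\<delta>/2..max T \<delta>} \<Longrightarrow> f s / \<phi> s \<le> B" using x0 B_def by blast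
  define K where "K = max 1 (max (f0+1) (max (finf+1) B))"
  show ?thesis
  proof (intro exI[of _ K] conjI allI impI)
    show "K > 0" unfolding K_def by simp
    fix s :: real assume "s > 0"
    show "f s / \<phi> s \<le> K"
    proof (cases "s < \<delta>")
      case True thus ?thesis using d(2)[OF \<open>s>0\<close>] unfolding K_def by fastforce
    next
      case False
      show ?thesis
      proof (cases "s \<ge> T")
        case True thus ?thesis using T unfolding K_def by fastforce
      next
        case F2: False
        hence "s \<in> {\<delta>/2..max T \<delta>}" using False d(1) by auto
        thus ?thesis using B unfolding K_def by fastforce
      qed
    qed
  qed
qed
lemma hk_le_nn:
  fixes F :: "real \<Rightarrow> real"
  assumes ab: "a \<le> b" and Fc: "continuous_on {a..b} F" and Fnn: "\<forall>x\<in>{a..b}. F x \<ge> 0"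
    and sub: "{a<..<b} \<subseteq> A" and le: "(\<integral>\<^sup>+ s\<in>A. ennreal (F s) \<partial>lborel) \<le> ennreal r" and r: "r \<ge> 0"
  shows "integral {a..b} F \<le> r"
proof -
  have hi: "(F has_integral integral {a..b} F) {a..b}"
    using integrable_continuous_interval[OF Fc] by blast
  have e: "(\<integral>\<^sup>+ x. ennreal (F x) * indicator {a..b} x \<partial>lborel) = ennreal (integral {a..b} F)"
    using nn_integral_has_integral_lebesgue'[OF _ hi] Fnn by blast
  have "AE x in lborel. ennreal (F x) * indicator {a..b} x \<le> ennreal (F x) * indicator A x"
    using AE_lborel_singleton[of a] AE_lborel_singleton[of b]
  proof eventually_elim
    case (elim x)
    thus ?case using sub by (cases "x \<in> A") (auto simp: indicator_def subset_eq)
  qed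
  hence "(\<integral>\<^sup>+ x. ennreal (F x) * indicator {a..b} x \<partial>lborel) \<le> (\<integral>\<^sup>+ s\<in>A. ennreal (F s) \<partial>lborel)"
    by (rule nn_integral_mono_AE)
  hence "ennreal (integral {a..b} F) \<le> ennreal r" using e le by simp
  thus ?thesis using r by simp
qed

lemma small_mu:
  fixes g G :: "real \<Rightarrow> real" and A :: "real set"
  assumes A: "open A" and Gc: "continuous_on A G" and Gnn: "\<forall>s\<in>A. G s \<ge> 0"
   and gc: "continuous_on {0..} g" and gmono: "\<forall>a b. 0 \<le> a \<longrightarrow> a \<le> b \<longrightarrow> g a \<le> g b"
   and gnn: "\<forall>z\<ge>0. g z \<ge> 0" and g0: "g 0 = 0"
   and fin: "(\<integral>\<^sup>+ s\<in>A. ennreal (g (G s)) \<partial>lborel) < \<infinity>"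
   and eps: "\<epsilon> > 0"
  shows "\<exists>\<mu>>0. \<forall>\<mu>'. 0 \<le> \<mu>' \<longrightarrow> \<mu>' \<le> \<mu> \<longrightarrow> (\<integral>\<^sup>+ s\<in>A. ennreal (g (\<mu>' * G s)) \<partial>lborel) < ennreal \<epsilon>"
proof -
  define F where "F i s = ennreal (g (G s / real (Suc i))) * indicator A s" for i s
  have meas: "F i \<in> borel_measurable lborel" for i
  proof -
    have "continuous_on A (\<lambda>s. g (G s / real (Suc i)))"
      by (rule continuous_on_compose2[OF gc]) (auto intro!: continuous_intros Gc simp: Gnn)
    hence "(\<lambda>x. indicator A x *\<^sub>R g (G x / real (Suc i))) \<in> borel_measurable borel"
      using A by (intro borel_measurable_continuous_on_indicator) auto
    hence "(\<lambda>x. ennreal (indicator A x *\<^sub>R g (G x / real (Suc i)))) \<in> borel_measurable borel"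
      by measurable
    moreover have "(\<lambda>x. ennreal (indicator A x *\<^sub>R g (G x / real (Suc i)))) = F i"
      unfolding F_def by (auto simp: indicator_def fun_eq_iff)
    ultimately show ?thesis by simp
  qed
  have dec: "AE x in lborel. F (Suc i) x \<le> F i x" for i
  proof (rule AE_I2)
    fix x show "F (Suc i) x \<le> F i x"
    proof (cases "x \<in> A")
      case True
      hence "G x / real (Suc (Suc i)) \<le> G x / real (Suc i)" using Gnn
        by (intro divide_left_mono) auto
      hence "g (G x / real (Suc (Suc i))) \<le> g (G x / real (Suc i))"
        using gmono Gnn True by auto
      thus ?thesis unfolding F_def using True by (auto intro: ennreal_leI)
    qed (auto simp: F_def)
  qed
  have F0: "(\<integral>\<^sup>+ x. F 0 x \<partial>lborel) < \<infinity>" using fin unfolding F_def by simp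
  have lim: "(\<integral>\<^sup>+ x. (INF i. F i x) \<partial>lborel) = (INF i. integral\<^sup>N lborel (F i))"
    by (rule nn_integral_monotone_convergence_INF_AE'[OF dec meas F0])
  have pt: "(INF i. F i x) = 0" for x
  proof (cases "x \<in> A")
    case True
    have ds: "decseq (\<lambda>i. F i x)"
    proof (rule decseq_SucI)
      fix i
      have "G x / real (Suc (Suc i)) \<le> G x / real (Suc i)" using Gnn True
        by (intro divide_left_mono) auto
      hence "g (G x / real (Suc (Suc i))) \<le> g (G x / real (Suc i))"
        using gmono Gnn True by auto
      thus "F (Suc i) x \<le> F i x" unfolding F_def using True by (auto intro: ennreal_leI)
    qed
    have t1: "(\<lambda>i. G x * inverse (real (Suc i))) \<longlonglongrightarrow> 0"
      using tendsto_mult_right_zero[OF LIMSEQ_inverse_real_of_nat] by simp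
    have t2: "(\<lambda>i. g (G x * inverse (real (Suc i)))) \<longlonglongrightarrow> g 0"
      by (rule continuous_on_tendsto_compose[OF gc t1]) (auto simp: Gnn True)
    have "(\<lambda>i. F i x) \<longlonglongrightarrow> 0"
      using tendsto_ennrealI[OF t2] True g0 unfolding F_def by (simp add: divide_inverse)
    thus ?thesis using LIMSEQ_INF[OF ds] LIMSEQ_unique by blast
  qed (simp add: F_def)
  have "(INF i. integral\<^sup>N lborel (F i)) < ennreal \<epsilon>" using lim pt eps by simp
  then obtain i where i: "integral\<^sup>N lborel (F i) < ennreal \<epsilon>" by (auto simp: INF_less_iff)
  show ?thesis
  proof (intro exI[of _ "1 / real (Suc i)"] conjI allI impI)
    show "0 < 1 / real (Suc i)" by simp
    fix \<mu>' :: real assume m: "0 \<le> \<mu>'" "\<mu>' \<le> 1 / real (Suc i)"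
    have "(\<integral>\<^sup>+ s\<in>A. ennreal (g (\<mu>' * G s)) \<partial>lborel) \<le> integral\<^sup>N lborel (F i)"
    proof (rule nn_integral_mono)
      fix x show "ennreal (g (\<mu>' * G x)) * indicator A x \<le> F i x"
      proof (cases "x \<in> A")
        case True
        have "\<mu>' * G x \<le> (1 / real (Suc i)) * G x" using m Gnn True by (intro mult_right_mono) auto
        hence "g (\<mu>' * G x) \<le> g (G x / real (Suc i))" using gmono m Gnn True by auto
        thus ?thesis unfolding F_def using True by (auto intro: ennreal_leI)
      qed (simp add: F_def)
    qed
    thus "(\<integral>\<^sup>+ s\<in>A. ennreal (g (\<mu>' * G s)) \<partial>lborel) < ennreal \<epsilon>" using i by simp
  qed
qed
lemma ftc_real:
  fixes F F' :: "real \<Rightarrow> real"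
  assumes "a \<le> b" "\<And>x. x \<in> {a..b} \<Longrightarrow> (F has_real_derivative F' x) (at x)"
  shows "(F' has_integral (F b - F a)) {a..b}"
  using assms
  by (intro fundamental_theorem_of_calculus)
     (auto simp: has_real_derivative_iff_has_vector_derivative[symmetric] intro: has_field_derivative_at_within)

theorem theorem3p7:
  fixes \<phi> \<psi>1 \<psi>2 c d f h :: "real \<Rightarrow> real" and f0 finf :: real
  assumes phiA: "phi_cond_A \<phi> \<psi>1 \<psi>2"
    and c: "continuous_on {0..1} c" "\<forall>t\<in>{0..1}. c t > 0"
    and d: "continuous_on {0..1} d" "\<forall>t\<in>{0..1}. d t > 0"
    and f: "continuous_on {0..} f" "\<forall>s\<ge>0. f s \<ge> 0" "\<forall>s>0. f s > 0"
    and h: "continuous_on {0<..<1} h" "\<forall>t\<in>{0<..<1}. h t \<ge> 0" "\<exists>t\<in>{0<..<1}. h t \<noteq> 0"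
    and h_int:
      "(\<integral>\<^sup>+ s\<in>{0<..<1/2}. ennreal (the_inv_into {0..} \<psi>1 (integral {s..1/2} h)) \<partial>lborel)
       + (\<integral>\<^sup>+ s\<in>{1/2<..<1}. ennreal (the_inv_into {0..} \<psi>1 (integral {1/2..s} h)) \<partial>lborel) < \<infinity>"
    and hpos: "0 \<le> alpha_h h" "alpha_h h < gamma1_h h" "gamma1_h h < gamma2_h h"
              "gamma2_h h < beta_h h" "beta_h h \<le> 1"
    and f0: "((\<lambda>s. f s / \<phi> s) \<longlongrightarrow> f0) (at_right 0)" "0 \<le> f0"
    and finf: "((\<lambda>s. f s / \<phi> s) \<longlongrightarrow> finf) at_top" "0 \<le> finf"
  shows "\<exists>lambar>0. \<forall>lam\<in>{0..<lambar}. \<not> (\<exists>u. is_pos_solution \<phi> c d h f lam u)"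
proof -
  obtain phig where phihom: "homeomorphism UNIV UNIV \<phi> phig" and sm: "strict_mono \<phi>"
    and odd: "\<forall>x. \<phi> (-x) = - \<phi> x" and ip1: "incr_homeo_pos \<psi>1"
    and condA: "\<forall>x\<ge>0. \<forall>y\<ge>0. \<phi> x * \<psi>1 y \<le> \<phi> (x*y)"
    using phiA unfolding phi_cond_A_def by blast
  have phic: "continuous_on UNIV \<phi>" using phihom unfolding homeomorphism_def by blast
  have phi0: "\<phi> 0 = 0" using odd[rule_format, of 0] by simp
  have phile: "\<And>a b. \<phi> a \<le> \<phi> b \<longleftrightarrow> a \<le> b" using strict_mono_less_eq[OF sm] by blast
  have phipos: "\<And>s. s > 0 \<Longrightarrow> \<phi> s > 0" using sm phi0 by (metis strict_monoD)
  define g where "g = the_inv_into {0..} \<psi>1"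
  have gp: "\<forall>z\<ge>0. g z \<ge> 0 \<and> \<psi>1 (g z) = z"
    and gmono: "\<forall>a b. 0 \<le> a \<longrightarrow> a \<le> b \<longrightarrow> g a \<le> g b"
    and gc: "continuous_on {0..} g" and g0: "g 0 = 0"
    using inv_props[OF ip1] unfolding g_def by auto
  have gnn: "\<forall>z\<ge>0. g z \<ge> 0" using gp by blast
  obtain K where K: "K > 0" "\<forall>s>0. f s / \<phi> s \<le> K"
    using f_bound[OF f(1) phic phipos f0(1) finf(1)] by blast
  have fK: "\<And>s. s > 0 \<Longrightarrow> f s \<le> K * \<phi> s"
    using K phipos by (metis pos_divide_le_eq)
  obtain tc where "tc \<in> {0..1::real}" and tc: "\<forall>y\<in>{0..1}. c tc \<le> c y"
    using continuous_attains_inf[of "{0..1::real}" c] c(1) by auto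
  define cmin where "cmin = c tc"
  have cmin: "cmin > 0" "\<forall>t\<in>{0..1}. cmin \<le> c t" using tc \<open>tc \<in> _\<close> c(2) cmin_def by auto
  obtain td where "td \<in> {0..1::real}" and td: "\<forall>y\<in>{0..1}. d td \<le> d y"
    using continuous_attains_inf[of "{0..1::real}" d] d(1) by auto
  define dmin where "dmin = d td"
  have dmin: "dmin > 0" "\<forall>t\<in>{0..1}. dmin \<le> d t" using td \<open>td \<in> _\<close> d(2) dmin_def by auto
  have hint: "\<And>a b. 0 < a \<Longrightarrow> b < 1 \<Longrightarrow> h integrable_on {a..b}"
    by (rule integrable_continuous_interval, rule continuous_on_subset[OF h(1)]) auto
  define GR where "GR s = integral {1/2..s} h" for s
  define GL where "GL s = integral {s..1/2} h" for s
  have GRc: "continuous_on {1/2..b} GR" if "b < 1" for b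
    unfolding GR_def by (rule indefinite_integral_continuous_1, rule hint) (use that in auto)
  have GLc: "continuous_on {a..1/2} GL" if "0 < a" for a
    unfolding GL_def by (rule indefinite_integral_continuous_1', rule hint) (use that in auto)
  have GRnn: "GR s \<ge> 0" if "1/2 \<le> s" "s < 1" for s
    unfolding GR_def using that h(2) by (intro integral_nonneg hint) auto
  have GLnn: "GL s \<ge> 0" if "0 < s" "s \<le> 1/2" for s
    unfolding GL_def using that h(2) by (intro integral_nonneg hint) auto
  have GRcA: "continuous_on {1/2<..<1} GR"
  proof (rule continuous_at_imp_continuous_on, intro ballI)
    fix x :: real assume x: "x \<in> {1/2<..<1}"
    show "isCont GR x"
      by (rule continuous_on_interior[OF GRc[of "(x+1)/2"]]) (use x in auto)
  qed
  have GLcA: "continuous_on {0<..<1/2} GL"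
  proof (rule continuous_at_imp_continuous_on, intro ballI)
    fix x :: real assume x: "x \<in> {0<..<1/2}"
    show "isCont GL x"
      by (rule continuous_on_interior[OF GLc[of "x/2"]]) (use x in auto)
  qed
  have finL: "(\<integral>\<^sup>+ s\<in>{0<..<1/2}. ennreal (g (GL s)) \<partial>lborel) < \<infinity>"
   and finR: "(\<integral>\<^sup>+ s\<in>{1/2<..<1}. ennreal (g (GR s)) \<partial>lborel) < \<infinity>"
    using h_int unfolding g_def GL_def GR_def by (auto simp: less_top)
  obtain \<mu>R where \<mu>R: "\<mu>R > 0" "\<forall>\<mu>'. 0 \<le> \<mu>' \<longrightarrow> \<mu>' \<le> \<mu>R \<longrightarrow>
      (\<integral>\<^sup>+ s\<in>{1/2<..<1}. ennreal (g (\<mu>' * GR s)) \<partial>lborel) < ennreal (cmin/2)"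
    using small_mu[OF _ GRcA _ gc gmono gnn g0 finR, of "cmin/2"] GRnn cmin by auto
  obtain \<mu>L where \<mu>L: "\<mu>L > 0" "\<forall>\<mu>'. 0 \<le> \<mu>' \<longrightarrow> \<mu>' \<le> \<mu>L \<longrightarrow>
      (\<integral>\<^sup>+ s\<in>{0<..<1/2}. ennreal (g (\<mu>' * GL s)) \<partial>lborel) < ennreal (cmin/2)"
    using small_mu[OF _ GLcA _ gc gmono gnn g0 finL, of "cmin/2"] GLnn cmin by auto
  define \<mu> where "\<mu> = min \<mu>R \<mu>L"
  have \<mu>: "\<mu> > 0" using \<mu>R \<mu>L \<mu>_def by auto
  have intR: "integral {1/2..t} (\<lambda>s. g (\<mu> * GR s)) \<le> cmin/2" if "1/2 \<le> t" "t < 1" for t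
  proof (rule hk_le_nn[where A="{1/2<..<1}"])
    show "continuous_on {1/2..t} (\<lambda>s. g (\<mu> * GR s))"
      by (rule continuous_on_compose2[OF gc]) (use that GRnn \<mu> in \<open>auto intro!: continuous_intros GRc\<close>)
    show "(\<integral>\<^sup>+ s\<in>{1/2<..<1}. ennreal (g (\<mu> * GR s)) \<partial>lborel) \<le> ennreal (cmin/2)"
      using \<mu>R(2)[rule_format, of \<mu>] \<mu> \<mu>_def by (auto intro: less_imp_le)
  qed (use that GRnn \<mu> gnn cmin in auto)
  have intL: "integral {t..1/2} (\<lambda>s. g (\<mu> * GL s)) \<le> cmin/2" if "0 < t" "t \<le> 1/2" for t
  proof (rule hk_le_nn[where A="{0<..<1/2}"])
    show "continuous_on {t..1/2} (\<lambda>s. g (\<mu> * GL s))"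
      by (rule continuous_on_compose2[OF gc]) (use that GLnn \<mu> in \<open>auto intro!: continuous_intros GLc\<close>)
    show "(\<integral>\<^sup>+ s\<in>{0<..<1/2}. ennreal (g (\<mu> * GL s)) \<partial>lborel) \<le> ennreal (cmin/2)"
      using \<mu>L(2)[rule_format, of \<mu>] \<mu> \<mu>_def by (auto intro: less_imp_le)
  qed (use that GLnn \<mu> gnn cmin in auto)
  show ?thesis
  proof (intro exI[of _ "\<mu> * dmin / K"] conjI ballI notI)
    show "0 < \<mu> * dmin / K" using \<mu> dmin K by simp
    fix lam assume lam: "lam \<in> {0..<\<mu> * dmin / K}"
    have lamK: "lam * K / dmin \<le> \<mu>" using lam K dmin by (simp add: field_simps)
    assume "\<exists>u. is_pos_solution \<phi> c d h f lam u"
    then obtain u u' w' where ucont: "continuous_on {0..1} u"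
      and uder: "\<forall>t\<in>{0<..<1}. (u has_real_derivative u' t) (at t)"
      and wder: "\<forall>t\<in>{0<..<1}. ((\<lambda>s. d s * \<phi> (c s * u' s)) has_real_derivative w' t) (at t)"
      and eq: "\<forall>t\<in>{0<..<1}. w' t + lam * h t * f (u t) = 0"
      and u01: "u 0 = 0" "u 1 = 0" and upos: "\<forall>t\<in>{0<..<1}. u t > 0"
      unfolding is_pos_solution_def is_solution_def by blast
    define W where "W s = d s * \<phi> (c s * u' s)" for s
    obtain t0 where t0I: "t0 \<in> {0..1::real}" and t0max: "\<forall>y\<in>{0..1}. u y \<le> u t0"
      using continuous_attains_sup[of "{0..1::real}" u] ucont by auto
    define M where "M = u t0"
    have M: "M > 0"
    proof -
      have "u (1/2) \<le> u t0" using t0max by auto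
      moreover have "u (1/2) > 0" using upos by auto
      ultimately show ?thesis using M_def by simp
    qed
    have t0: "0 < t0" "t0 < 1" using M u01 t0I M_def by (auto simp: less_le)
    have u'0: "u' t0 = 0"
    proof -
      have "DERIV u t0 :> u' t0" using uder t0 by auto
      moreover have "0 < min t0 (1 - t0)" using t0 by auto
      moreover have "\<forall>y. \<bar>t0 - y\<bar> < min t0 (1 - t0) \<longrightarrow> u y \<le> u t0"
        using t0max by (auto simp: abs_if split: if_splits)
      ultimately show ?thesis by (rule DERIV_local_max)
    qed
    have W0: "W t0 = 0" unfolding W_def u'0 using phi0 by simp
    have uM: "\<And>t. t \<in> {0..1} \<Longrightarrow> u t \<le> M" using t0max M_def by auto
    have fb: "f (u t) \<le> K * \<phi> M" if "t \<in> {0<..<1}" for t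
    proof -
      have "f (u t) \<le> K * \<phi> (u t)" using fK upos that by auto
      also have "\<dots> \<le> K * \<phi> M" using uM[of t] that K phile by (auto intro: mult_left_mono)
      finally show ?thesis .
    qed
    have w'eq: "w' t = - (lam * h t * f (u t))" if "t \<in> {0<..<1}" for t using eq[rule_format, OF that] by linarith
    have cA: "\<phi> M * z \<le> \<phi> (M * g z)" if "z \<ge> 0" for z
      using condA[rule_format, of M "g z"] M gp that by auto
    have phiM: "\<phi> M > 0" using phipos M by auto
    have lam0: "lam \<ge> 0" using lam by auto
    have hbnd: "- w' s \<le> lam * K * \<phi> M * h s" if "s \<in> {0<..<1}" for s
      using w'eq[OF that] fb[OF that] h(2) that lam0 mult_left_mono[of "f (u s)" "K * \<phi> M" "lam * h s"]
      by (auto simp: algebra_simps)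
    show False
    proof (cases "t0 \<ge> 1/2")
      case True
      have Wb: "- W s \<le> lam * K * \<phi> M * GR s" if s: "t0 \<le> s" "s < 1" for s
      proof -
        have i1: "(w' has_integral (W s - W t0)) {t0..s}"
          unfolding W_def by (rule ftc_real) (use s t0 wder in auto)
        have i2: "((\<lambda>x. lam * K * \<phi> M * h x) has_integral (lam * K * \<phi> M * integral {t0..s} h)) {t0..s}"
          using hint[of t0 s] t0 s by (intro has_integral_mult_right) (auto simp: integrable_integral)
        have "- (W s - W t0) \<le> lam * K * \<phi> M * integral {t0..s} h"
          by (rule has_integral_le[OF has_integral_neg[OF i1] i2]) (use hbnd t0 s in auto)
        moreover have "integral {t0..s} h \<le> GR s"
        proof -
          have "GR s = integral {1/2..t0} h + integral {t0..s} h"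
            unfolding GR_def using Henstock_Kurzweil_Integration.integral_combine[where f=h and a="1/2" and c=t0 and b=s] hint[of "1/2" s] True s by simp
          moreover have "integral {1/2..t0} h \<ge> 0"
            using hint[of "1/2" t0] h(2) t0 by (intro integral_nonneg) auto
          ultimately show ?thesis by simp
        qed
        moreover have "lam * K * \<phi> M \<ge> 0" using lam0 K phiM by simp
        ultimately show ?thesis using W0 mult_left_mono[of "integral {t0..s} h" "GR s" "lam * K * \<phi> M"] by linarith
      qed
      have ub: "- u' s \<le> M / cmin * g (\<mu> * GR s)" if s: "t0 \<le> s" "s < 1" for s
      proof -
        have s01: "s \<in> {0..1}" using s t0 by auto
        have ds: "d s \<ge> dmin" "c s \<ge> cmin" using dmin cmin s01 by auto
        have G0: "GR s \<ge> 0" using GRnn s True by auto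
        have "\<phi> (- (c s * u' s)) = - W s / d s" unfolding W_def using odd ds dmin by simp
        also have "\<dots> \<le> lam * K * \<phi> M * GR s / dmin"
        proof (cases "- W s \<le> 0")
          case True
          have "- W s / d s \<le> 0" using True ds dmin by (intro divide_nonpos_pos) auto
          moreover have "0 \<le> lam * K * \<phi> M * GR s / dmin" using dmin G0 lam0 K phiM by simp
          ultimately show ?thesis by linarith
        next
          case False
          have "- W s / d s \<le> - W s / dmin" using False ds dmin by (intro divide_left_mono) auto
          also have "\<dots> \<le> lam * K * \<phi> M * GR s / dmin" using Wb[OF s] dmin by (intro divide_right_mono) auto
          finally show ?thesis .
        qed
        also have "\<dots> = \<phi> M * GR s * (lam * K / dmin)" by simp
        also have "\<dots> \<le> \<phi> M * GR s * \<mu>" using lamK phiM G0 by (intro mult_left_mono) auto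
        also have "\<dots> = \<phi> M * (\<mu> * GR s)" by simp
        also have "\<dots> \<le> \<phi> (M * g (\<mu> * GR s))" using cA G0 \<mu> by simp
        finally have "- (c s * u' s) \<le> M * g (\<mu> * GR s)" using phile by blast
        moreover have "g (\<mu> * GR s) \<ge> 0" using gnn G0 \<mu> by simp
        ultimately show ?thesis
        proof -
          assume a: "- (c s * u' s) \<le> M * g (\<mu> * GR s)" and gz: "g (\<mu> * GR s) \<ge> 0"
          have cs: "c s > 0" using ds cmin by linarith
          have "- u' s = (- (c s * u' s)) / c s" using cs by simp
          also have "\<dots> \<le> M * g (\<mu> * GR s) / c s" using a cs by (intro divide_right_mono) auto
          also have "\<dots> \<le> M * g (\<mu> * GR s) / cmin" using cs ds cmin M gz by (intro divide_left_mono) auto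
          finally show ?thesis by simp
        qed
      qed
      have uge: "u t \<ge> M / 2" if t: "t0 \<le> t" "t < 1" for t
      proof -
        have i1: "(u' has_integral (u t - u t0)) {t0..t}"
          by (rule ftc_real) (use t t0 uder in auto)
        have gi: "(\<lambda>s. g (\<mu> * GR s)) integrable_on {t0..t}"
          by (rule integrable_continuous_interval, rule continuous_on_compose2[OF gc])
             (use t True GRnn \<mu> in \<open>auto intro!: continuous_intros continuous_on_subset[OF GRc[of t]]\<close>)
        have i2: "((\<lambda>s. M / cmin * g (\<mu> * GR s)) has_integral (M / cmin * integral {t0..t} (\<lambda>s. g (\<mu> * GR s)))) {t0..t}"
          using gi by (intro has_integral_mult_right) (auto simp: integrable_integral)
        have "- (u t - u t0) \<le> M / cmin * integral {t0..t} (\<lambda>s. g (\<mu> * GR s))"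
          by (rule has_integral_le[OF has_integral_neg[OF i1] i2]) (use ub t in auto)
        moreover have "integral {t0..t} (\<lambda>s. g (\<mu> * GR s)) \<le> cmin / 2"
        proof -
          have gi2: "(\<lambda>s. g (\<mu> * GR s)) integrable_on {1/2..t}"
            by (rule integrable_continuous_interval, rule continuous_on_compose2[OF gc])
               (use t True GRnn \<mu> in \<open>auto intro!: continuous_intros GRc\<close>)
          have "integral {1/2..t} (\<lambda>s. g (\<mu> * GR s)) = integral {1/2..t0} (\<lambda>s. g (\<mu> * GR s)) + integral {t0..t} (\<lambda>s. g (\<mu> * GR s))"
            using Henstock_Kurzweil_Integration.integral_combine[where f="\<lambda>s. g (\<mu> * GR s)" and a="1/2" and c=t0 and b=t] gi2 True t by simp
          moreover have "integral {1/2..t0} (\<lambda>s. g (\<mu> * GR s)) \<ge> 0"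
            using integrable_on_subinterval[OF gi2, of "1/2" t0] t gnn GRnn \<mu> t0
            by (intro integral_nonneg) auto
          ultimately show ?thesis using intR[of t] True t by simp
        qed
        moreover have "M / cmin \<ge> 0" using M cmin by simp
        ultimately have "- (u t - M) \<le> M / cmin * (cmin / 2)"
          using M_def mult_left_mono[of "integral {t0..t} (\<lambda>s. g (\<mu> * GR s))" "cmin / 2" "M / cmin"] by linarith
        thus ?thesis using cmin by simp
      qed
      obtain \<delta> where \<delta>: "\<delta> > 0" "\<forall>x'\<in>{0..1}. dist x' 1 < \<delta> \<longrightarrow> dist (u x') (u 1) < M/2"
        using ucont[unfolded continuous_on_iff, rule_format, of 1 "M/2"] M by auto
      define x' where "x' = max t0 (1 - \<delta>/2)"
      have "x' \<in> {0..1}" "dist x' 1 < \<delta>" "t0 \<le> x'" "x' < 1" using t0 \<delta> by (auto simp: x'_def dist_real_def)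
      thus False using \<delta>(2) uge[of x'] u01 by (auto simp: dist_real_def)
    next
      case False
      hence t0h: "t0 \<le> 1/2" by simp
      have Wb: "W s \<le> lam * K * \<phi> M * GL s" if s: "0 < s" "s \<le> t0" for s
      proof -
        have i1: "(w' has_integral (W t0 - W s)) {s..t0}"
          unfolding W_def by (rule ftc_real) (use s t0 wder in auto)
        have i2: "((\<lambda>x. lam * K * \<phi> M * h x) has_integral (lam * K * \<phi> M * integral {s..t0} h)) {s..t0}"
          using hint[of s t0] t0 s by (intro has_integral_mult_right) (auto simp: integrable_integral)
        have "- (W t0 - W s) \<le> lam * K * \<phi> M * integral {s..t0} h"
          by (rule has_integral_le[OF has_integral_neg[OF i1] i2]) (use hbnd t0 s in auto)
        moreover have "integral {s..t0} h \<le> GL s"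
        proof -
          have "GL s = integral {s..t0} h + integral {t0..1/2} h"
            unfolding GL_def using Henstock_Kurzweil_Integration.integral_combine[where f=h and a=s and c=t0 and b="1/2"] hint[of s "1/2"] t0h s by simp
          moreover have "integral {t0..1/2} h \<ge> 0"
            using hint[of t0 "1/2"] h(2) t0 by (intro integral_nonneg) auto
          ultimately show ?thesis by simp
        qed
        moreover have "lam * K * \<phi> M \<ge> 0" using lam0 K phiM by simp
        ultimately show ?thesis using W0 mult_left_mono[of "integral {s..t0} h" "GL s" "lam * K * \<phi> M"] by linarith
      qed
      have ub: "u' s \<le> M / cmin * g (\<mu> * GL s)" if s: "0 < s" "s \<le> t0" for s
      proof -
        have s01: "s \<in> {0..1}" using s t0 by auto
        have ds: "d s \<ge> dmin" "c s \<ge> cmin" using dmin cmin s01 by auto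
        have G0: "GL s \<ge> 0" using GLnn s t0h by auto
        have "\<phi> (c s * u' s) = W s / d s" unfolding W_def using ds dmin by simp
        also have "\<dots> \<le> lam * K * \<phi> M * GL s / dmin"
        proof (cases "W s \<le> 0")
          case True
          have "W s / d s \<le> 0" using True ds dmin by (intro divide_nonpos_pos) auto
          moreover have "0 \<le> lam * K * \<phi> M * GL s / dmin" using dmin G0 lam0 K phiM by simp
          ultimately show ?thesis by linarith
        next
          case False
          have "W s / d s \<le> W s / dmin" using False ds dmin by (intro divide_left_mono) auto
          also have "\<dots> \<le> lam * K * \<phi> M * GL s / dmin" using Wb[OF s] dmin by (intro divide_right_mono) auto
          finally show ?thesis .
        qed
        also have "\<dots> = \<phi> M * GL s * (lam * K / dmin)" by simp
        also have "\<dots> \<le> \<phi> M * GL s * \<mu>" using lamK phiM G0 by (intro mult_left_mono) auto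
        also have "\<dots> = \<phi> M * (\<mu> * GL s)" by simp
        also have "\<dots> \<le> \<phi> (M * g (\<mu> * GL s))" using cA G0 \<mu> by simp
        finally have "c s * u' s \<le> M * g (\<mu> * GL s)" using phile by blast
        moreover have "g (\<mu> * GL s) \<ge> 0" using gnn G0 \<mu> by simp
        ultimately show ?thesis
        proof -
          assume a: "c s * u' s \<le> M * g (\<mu> * GL s)" and gz: "g (\<mu> * GL s) \<ge> 0"
          have cs: "c s > 0" using ds cmin by linarith
          have "u' s = (c s * u' s) / c s" using cs by simp
          also have "\<dots> \<le> M * g (\<mu> * GL s) / c s" using a cs by (intro divide_right_mono) auto
          also have "\<dots> \<le> M * g (\<mu> * GL s) / cmin" using cs ds cmin M gz by (intro divide_left_mono) auto
          finally show ?thesis by simp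
        qed
      qed
      have uge: "u t \<ge> M / 2" if t: "0 < t" "t \<le> t0" for t
      proof -
        have i1: "(u' has_integral (u t0 - u t)) {t..t0}"
          by (rule ftc_real) (use t t0 uder in auto)
        have gi: "(\<lambda>s. g (\<mu> * GL s)) integrable_on {t..t0}"
          by (rule integrable_continuous_interval, rule continuous_on_compose2[OF gc])
             (use t t0h GLnn \<mu> in \<open>auto intro!: continuous_intros continuous_on_subset[OF GLc[of t]]\<close>)
        have i2: "((\<lambda>s. M / cmin * g (\<mu> * GL s)) has_integral (M / cmin * integral {t..t0} (\<lambda>s. g (\<mu> * GL s)))) {t..t0}"
          using gi by (intro has_integral_mult_right) (auto simp: integrable_integral)
        have "u t0 - u t \<le> M / cmin * integral {t..t0} (\<lambda>s. g (\<mu> * GL s))"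
          by (rule has_integral_le[OF i1 i2]) (use ub t in auto)
        moreover have "integral {t..t0} (\<lambda>s. g (\<mu> * GL s)) \<le> cmin / 2"
        proof -
          have gi2: "(\<lambda>s. g (\<mu> * GL s)) integrable_on {t..1/2}"
            by (rule integrable_continuous_interval, rule continuous_on_compose2[OF gc])
               (use t t0h GLnn \<mu> in \<open>auto intro!: continuous_intros GLc\<close>)
          have "integral {t..1/2} (\<lambda>s. g (\<mu> * GL s)) = integral {t..t0} (\<lambda>s. g (\<mu> * GL s)) + integral {t0..1/2} (\<lambda>s. g (\<mu> * GL s))"
            using Henstock_Kurzweil_Integration.integral_combine[where f="\<lambda>s. g (\<mu> * GL s)" and a=t and c=t0 and b="1/2"] gi2 t0h t by simp
          moreover have "integral {t0..1/2} (\<lambda>s. g (\<mu> * GL s)) \<ge> 0"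
            using integrable_on_subinterval[OF gi2, of t0 "1/2"] t gnn GLnn \<mu> t0
            by (intro integral_nonneg) auto
          ultimately show ?thesis using intL[of t] t0h t by simp
        qed
        moreover have "M / cmin \<ge> 0" using M cmin by simp
        ultimately have "M - u t \<le> M / cmin * (cmin / 2)"
          using M_def mult_left_mono[of "integral {t..t0} (\<lambda>s. g (\<mu> * GL s))" "cmin / 2" "M / cmin"] by linarith
        thus ?thesis using cmin by simp
      qed
      obtain \<delta> where \<delta>: "\<delta> > 0" "\<forall>x'\<in>{0..1}. dist x' 0 < \<delta> \<longrightarrow> dist (u x') (u 0) < M/2"
        using ucont[unfolded continuous_on_iff, rule_format, of 0 "M/2"] M by auto
      define x' where "x' = min t0 (\<delta>/2)"
      have "x' \<in> {0..1}" "dist x' 0 < \<delta>" "x' \<le> t0" "0 < x'" using t0 \<delta> by (auto simp: x'_def dist_real_def)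
      thus False using \<delta>(2) uge[of x'] u01 by (auto simp: dist_real_def)
    qed
  qed
qed

end
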